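(* In the setting below, let $D(\alpha)=\mathrm{Var}_{\rho}(E_{loc})-\mathrm{Var}_{\phi_\alpha}(E_{loc}\kappa_\alpha)$. Then: (i) if $0\le\alpha\le 2$, then $D(\alpha)\ge 0$; (ii) if $\alpha<0$ or $\alpha>2$, then $D(\alpha)\le 0$; (iii) $D(0)=0$, $D(2)=0$, and $D(1)=\mathrm{Var}_\rho(|E_{loc}|)\ge 0$.
   Context: Let $\mathbb{V}=\{-1,1\}^n$, let $\rho:\mathbb{V}\to(0,1]$, $v\mapsto\rho^v_v$, be a probability distribution, and let $E_{loc}:\mathbb{V}\to\mathbb{R}$ satisfy $E_{loc}(v)\ne 0$ for all $v$. For $\alpha\in\mathbb{R}$ set $\lambda_\alpha=\big(\sum_v|E_{loc}(v)|^\alpha\rho^v_v\big)^{-1}$, $\kappa_\alpha(v)=1/(\lambda_\alpha|E_{loc}(v)|^\alpha)$, and $\phi_\alpha(v)=\lambda_\alpha|E_{loc}(v)|^\alpha\rho^v_v$ (a probability distribution with $\rho^v_v=\kappa_\alpha(v)\phi_\alpha(v)$). For a probability distribution $q$ on $\mathbb{V}$, $\mathrm{Var}_q(f)=\sum_vq(v)f(v)^2-(\sum_vq(v)f(v))^2$. *)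

theory Defs
  imports "HOL-Analysis.Analysis"
begin

definition spins :: "nat \<Rightarrow> int list set" where
  "spins n = {v. length v = n \<and> set v \<subseteq> {-1, 1}}"

definition Var :: "'a set \<Rightarrow> ('a \<Rightarrow> real) \<Rightarrow> ('a \<Rightarrow> real) \<Rightarrow> real" where
  "Var V q f = (\<Sum>v\<in>V. q v * (f v)\<^sup>2) - (\<Sum>v\<in>V. q v * f v)\<^sup>2"

definition lam :: "'a set \<Rightarrow> ('a \<Rightarrow> real) \<Rightarrow> ('a \<Rightarrow> real) \<Rightarrow> real \<Rightarrow> real" where
  "lam V \<rho> E \<alpha> = 1 / (\<Sum>v\<in>V. \<bar>E v\<bar> powr \<alpha> * \<rho> v)"

definition kappa :: "'a set \<Rightarrow> ('a \<Rightarrow> real) \<Rightarrow> ('a \<Rightarrow> real) \<Rightarrow> real \<Rightarrow> 'a \<Rightarrow> real" where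
  "kappa V \<rho> E \<alpha> v = 1 / (lam V \<rho> E \<alpha> * \<bar>E v\<bar> powr \<alpha>)"

definition phi :: "'a set \<Rightarrow> ('a \<Rightarrow> real) \<Rightarrow> ('a \<Rightarrow> real) \<Rightarrow> real \<Rightarrow> 'a \<Rightarrow> real" where
  "phi V \<rho> E \<alpha> v = lam V \<rho> E \<alpha> * \<bar>E v\<bar> powr \<alpha> * \<rho> v"

definition Dfun :: "'a set \<Rightarrow> ('a \<Rightarrow> real) \<Rightarrow> ('a \<Rightarrow> real) \<Rightarrow> real \<Rightarrow> real" where
  "Dfun V \<rho> E \<alpha> = Var V \<rho> E - Var V (phi V \<rho> E \<alpha>) (\<lambda>v. E v * kappa V \<rho> E \<alpha> v)"

end

theory Submission
  imports Defs
begin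

lemma finite_spins: "finite (spins n)"
proof -
  have "spins n \<subseteq> {xs. set xs \<subseteq> {-1,1} \<and> length xs = n}" by (auto simp: spins_def)
  moreover have "finite {xs. set xs \<subseteq> ({-1,1}::int set) \<and> length xs = n}"
    by (rule finite_lists_length_eq) simp
  ultimately show ?thesis by (rule finite_subset)
qed

lemma sign_pos:
  fixes x y \<alpha> :: real
  assumes "0 < x" "0 < y" "0 \<le> \<alpha>" "\<alpha> \<le> 2"
  shows "0 \<le> (x powr \<alpha> - y powr \<alpha>) * (x powr (2-\<alpha>) - y powr (2-\<alpha>))"
proof (cases "x \<le> y")
  case True
  have "x powr \<alpha> \<le> y powr \<alpha>" using powr_mono2[OF assms(3)] True assms by simp
  moreover have "x powr (2-\<alpha>) \<le> y powr (2-\<alpha>)" using powr_mono2[of "2-\<alpha>"] True assms by simp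
  ultimately show ?thesis by (intro mult_nonpos_nonpos) auto
next
  case False
  have "y powr \<alpha> \<le> x powr \<alpha>" using powr_mono2[OF assms(3)] False assms by simp
  moreover have "y powr (2-\<alpha>) \<le> x powr (2-\<alpha>)" using powr_mono2[of "2-\<alpha>"] False assms by simp
  ultimately show ?thesis by (intro mult_nonneg_nonneg) auto
qed

lemma sign_neg:
  fixes x y \<alpha> :: real
  assumes "0 < x" "0 < y" "\<alpha> < 0 \<or> \<alpha> > 2"
  shows "(x powr \<alpha> - y powr \<alpha>) * (x powr (2-\<alpha>) - y powr (2-\<alpha>)) \<le> 0"
  using assms(3)
proof
  assume a: "\<alpha> < 0"
  show ?thesis
  proof (cases "x \<le> y")
    case True
    have "y powr \<alpha> \<le> x powr \<alpha>" using powr_mono2'[of \<alpha> x y] a True assms by simp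
    moreover have "x powr (2-\<alpha>) \<le> y powr (2-\<alpha>)" using powr_mono2[of "2-\<alpha>"] a True assms by simp
    ultimately show ?thesis by (intro mult_nonneg_nonpos) auto
  next
    case False
    have "x powr \<alpha> \<le> y powr \<alpha>" using powr_mono2'[of \<alpha> y x] a False assms by simp
    moreover have "y powr (2-\<alpha>) \<le> x powr (2-\<alpha>)" using powr_mono2[of "2-\<alpha>"] a False assms by simp
    ultimately show ?thesis by (intro mult_nonpos_nonneg) auto
  qed
next
  assume a: "\<alpha> > 2"
  show ?thesis
  proof (cases "x \<le> y")
    case True
    have "x powr \<alpha> \<le> y powr \<alpha>" using powr_mono2[of \<alpha> x y] a True assms by simp
    moreover have "y powr (2-\<alpha>) \<le> x powr (2-\<alpha>)" using powr_mono2'[of "2-\<alpha>" x y] a True assms by simp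
    ultimately show ?thesis by (intro mult_nonpos_nonneg) auto
  next
    case False
    have "y powr \<alpha> \<le> x powr \<alpha>" using powr_mono2[of \<alpha> y x] a False assms by simp
    moreover have "x powr (2-\<alpha>) \<le> y powr (2-\<alpha>)" using powr_mono2'[of "2-\<alpha>" y x] a False assms by simp
    ultimately show ?thesis by (intro mult_nonneg_nonpos) auto
  qed
qed

lemma aux1: "(T::real) \<noteq> 0 \<Longrightarrow> (A::real) \<noteq> 0 \<Longrightarrow>
  (1/T) * A * r * (e * (1 / ((1/T) * A)))\<^sup>2 = T * (r * (e\<^sup>2 / A))"
  by (simp add: field_simps power2_eq_square)

lemma aux2: "(T::real) \<noteq> 0 \<Longrightarrow> (A::real) \<noteq> 0 \<Longrightarrow>
  (1/T) * A * r * (e * (1 / ((1/T) * A))) = r * e"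
  by (simp add: field_simps)

context
  fixes V :: "'a set" and \<rho> E :: "'a \<Rightarrow> real"
  assumes fin: "finite V" and rpos: "\<forall>v\<in>V. 0 < \<rho> v" and rsum: "sum \<rho> V = 1"
    and Enz: "\<forall>v\<in>V. E v \<noteq> 0"
begin

definition S :: "real \<Rightarrow> real" where "S \<beta> = (\<Sum>v\<in>V. \<rho> v * \<bar>E v\<bar> powr \<beta>)"

lemma S0: "S 0 = 1"
proof -
  have "S 0 = sum \<rho> V" unfolding S_def using Enz by (intro sum.cong) auto
  thus ?thesis using rsum by simp
qed

lemma Spos: "S \<beta> > 0"
proof -
  have "V \<noteq> {}" using rsum by auto
  thus ?thesis unfolding S_def using fin rpos Enz by (intro sum_pos) auto
qed

lemma S2: "S 2 = (\<Sum>v\<in>V. \<rho> v * (E v)\<^sup>2)"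
  unfolding S_def by (rule sum.cong) simp_all

lemma S1: "S 1 = (\<Sum>v\<in>V. \<rho> v * \<bar>E v\<bar>)"
  unfolding S_def using Enz by (intro sum.cong) auto

lemma D_formula: "Dfun V \<rho> E \<alpha> = S 2 - S \<alpha> * S (2-\<alpha>)"
proof -
  have L: "lam V \<rho> E \<alpha> = 1 / S \<alpha>" unfolding lam_def S_def by (simp add: mult.commute)
  have SA: "S \<alpha> \<noteq> 0" using Spos by (metis less_irrefl)
  have 1: "phi V \<rho> E \<alpha> v * (E v * kappa V \<rho> E \<alpha> v)\<^sup>2 = S \<alpha> * (\<rho> v * \<bar>E v\<bar> powr (2-\<alpha>))"
    if "v \<in> V" for v
  proof -
    have e: "E v \<noteq> 0" using Enz that by auto
    have "\<bar>E v\<bar> powr (2-\<alpha>) = \<bar>E v\<bar> powr 2 / \<bar>E v\<bar> powr \<alpha>" by (simp add: powr_diff)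
    also have "\<bar>E v\<bar> powr 2 = (E v)\<^sup>2" using e by simp
    finally have p: "\<bar>E v\<bar> powr (2-\<alpha>) = (E v)\<^sup>2 / \<bar>E v\<bar> powr \<alpha>" .
    have A: "\<bar>E v\<bar> powr \<alpha> \<noteq> 0" using e by simp
    show ?thesis unfolding phi_def kappa_def L p by (rule aux1[OF SA A])
  qed
  have 2: "phi V \<rho> E \<alpha> v * (E v * kappa V \<rho> E \<alpha> v) = \<rho> v * E v" if "v \<in> V" for v
  proof -
    have A: "\<bar>E v\<bar> powr \<alpha> \<noteq> 0" using Enz that by simp
    show ?thesis unfolding phi_def kappa_def L by (rule aux2[OF SA A])
  qed
  have s1: "(\<Sum>v\<in>V. phi V \<rho> E \<alpha> v * (E v * kappa V \<rho> E \<alpha> v)\<^sup>2) = (\<Sum>v\<in>V. S \<alpha> * (\<rho> v * \<bar>E v\<bar> powr (2-\<alpha>)))"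
    using 1 by (rule sum.cong[OF refl])
  have s2: "(\<Sum>v\<in>V. phi V \<rho> E \<alpha> v * (E v * kappa V \<rho> E \<alpha> v)) = (\<Sum>v\<in>V. \<rho> v * E v)"
    using 2 by (rule sum.cong[OF refl])
  have "Dfun V \<rho> E \<alpha> = (\<Sum>v\<in>V. \<rho> v * (E v)\<^sup>2) - (\<Sum>v\<in>V. S \<alpha> * (\<rho> v * \<bar>E v\<bar> powr (2-\<alpha>)))"
    unfolding Dfun_def Var_def s1 s2 by simp
  also have "\<dots> = S 2 - S \<alpha> * S (2-\<alpha>)" unfolding S2 by (simp add: S_def sum_distrib_left)
  finally show ?thesis .
qed

lemma D_double: "2 * Dfun V \<rho> E \<alpha> = (\<Sum>v\<in>V. \<Sum>w\<in>V. \<rho> v * \<rho> w *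
   ((\<bar>E v\<bar> powr \<alpha> - \<bar>E w\<bar> powr \<alpha>) * (\<bar>E v\<bar> powr (2-\<alpha>) - \<bar>E w\<bar> powr (2-\<alpha>))))"
proof -
  let ?f = "\<lambda>\<beta> v. \<rho> v * \<bar>E v\<bar> powr \<beta>"
  have pt: "\<rho> v * \<rho> w *
   ((\<bar>E v\<bar> powr \<alpha> - \<bar>E w\<bar> powr \<alpha>) * (\<bar>E v\<bar> powr (2-\<alpha>) - \<bar>E w\<bar> powr (2-\<alpha>)))
   = ?f 2 v * ?f 0 w - ?f \<alpha> v * ?f (2-\<alpha>) w - ?f (2-\<alpha>) v * ?f \<alpha> w + ?f 0 v * ?f 2 w"
    if "v \<in> V" "w \<in> V" for v w
  proof -
    have "E v \<noteq> 0" "E w \<noteq> 0" using Enz that by auto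
    moreover have "\<bar>E v\<bar> powr \<alpha> * \<bar>E v\<bar> powr (2-\<alpha>) = \<bar>E v\<bar> powr 2"
      "\<bar>E w\<bar> powr \<alpha> * \<bar>E w\<bar> powr (2-\<alpha>) = \<bar>E w\<bar> powr 2"
      by (simp_all add: powr_add[symmetric])
    ultimately show ?thesis by (simp add: algebra_simps)
  qed
  have "(\<Sum>v\<in>V. \<Sum>w\<in>V. \<rho> v * \<rho> w *
   ((\<bar>E v\<bar> powr \<alpha> - \<bar>E w\<bar> powr \<alpha>) * (\<bar>E v\<bar> powr (2-\<alpha>) - \<bar>E w\<bar> powr (2-\<alpha>))))
    = (\<Sum>v\<in>V. \<Sum>w\<in>V. ?f 2 v * ?f 0 w - ?f \<alpha> v * ?f (2-\<alpha>) w - ?f (2-\<alpha>) v * ?f \<alpha> w + ?f 0 v * ?f 2 w)"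
    using pt by (intro sum.cong) auto
  also have "\<dots> = S 2 * S 0 - S \<alpha> * S (2-\<alpha>) - S (2-\<alpha>) * S \<alpha> + S 0 * S 2"
    unfolding S_def sum_product by (simp add: sum.distrib sum_subtractf)
  also have "\<dots> = 2 * Dfun V \<rho> E \<alpha>" unfolding D_formula S0 by simp
  finally show ?thesis by simp
qed

lemma D_nonneg: "0 \<le> \<alpha> \<Longrightarrow> \<alpha> \<le> 2 \<Longrightarrow> Dfun V \<rho> E \<alpha> \<ge> 0"
proof -
  assume a: "0 \<le> \<alpha>" "\<alpha> \<le> 2"
  have "0 \<le> 2 * Dfun V \<rho> E \<alpha>" unfolding D_double
    using rpos Enz a by (intro sum_nonneg mult_nonneg_nonneg sign_pos) (auto simp: less_imp_le)
  thus ?thesis by simp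
qed

lemma D_nonpos: "\<alpha> < 0 \<or> \<alpha> > 2 \<Longrightarrow> Dfun V \<rho> E \<alpha> \<le> 0"
proof -
  assume a: "\<alpha> < 0 \<or> \<alpha> > 2"
  have "2 * Dfun V \<rho> E \<alpha> \<le> 0" unfolding D_double
    using rpos Enz a by (intro sum_nonpos mult_nonneg_nonpos sign_neg) (auto simp: less_imp_le)
  thus ?thesis by simp
qed

lemma all_facts: "(\<forall>\<alpha>::real. 0 \<le> \<alpha> \<and> \<alpha> \<le> 2 \<longrightarrow> Dfun V \<rho> E \<alpha> \<ge> 0)
       \<and> (\<forall>\<alpha>::real. \<alpha> < 0 \<or> \<alpha> > 2 \<longrightarrow> Dfun V \<rho> E \<alpha> \<le> 0)
       \<and> Dfun V \<rho> E 0 = 0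
       \<and> Dfun V \<rho> E 2 = 0
       \<and> Dfun V \<rho> E 1 = Var V \<rho> (\<lambda>v. \<bar>E v\<bar>)
       \<and> Var V \<rho> (\<lambda>v. \<bar>E v\<bar>) \<ge> 0"
proof -
  have d1: "Dfun V \<rho> E 1 = Var V \<rho> (\<lambda>v. \<bar>E v\<bar>)"
    unfolding D_formula Var_def S2 using S1 by (simp add: power2_eq_square)
  have "Dfun V \<rho> E 1 \<ge> 0" by (rule D_nonneg) auto
  thus ?thesis using D_nonneg D_nonpos d1 by (simp add: D_formula S0)
qed

end

theorem lemmaC3:
  fixes n :: nat and \<rho> :: "int list \<Rightarrow> real" and E :: "int list \<Rightarrow> real"
  assumes rho_pos: "\<forall>v\<in>spins n. 0 < \<rho> v \<and> \<rho> v \<le> 1"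
    and rho_sum: "(\<Sum>v\<in>spins n. \<rho> v) = 1"
    and E_nz: "\<forall>v\<in>spins n. E v \<noteq> 0"
  shows "(\<forall>\<alpha>::real. 0 \<le> \<alpha> \<and> \<alpha> \<le> 2 \<longrightarrow> Dfun (spins n) \<rho> E \<alpha> \<ge> 0)
       \<and> (\<forall>\<alpha>::real. \<alpha> < 0 \<or> \<alpha> > 2 \<longrightarrow> Dfun (spins n) \<rho> E \<alpha> \<le> 0)
       \<and> Dfun (spins n) \<rho> E 0 = 0
       \<and> Dfun (spins n) \<rho> E 2 = 0
       \<and> Dfun (spins n) \<rho> E 1 = Var (spins n) \<rho> (\<lambda>v. \<bar>E v\<bar>)
       \<and> Var (spins n) \<rho> (\<lambda>v. \<bar>E v\<bar>) \<ge> 0"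
  by (rule all_facts[OF finite_spins]) (use rho_pos rho_sum E_nz in auto)

end
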